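(* Let $K$ be a field with a non-trivial non-Archimedean valuation $|\cdot|$, let $X$ be a complete non-Archimedean normed space over $K$, and let $G$ be an additive (abelian) group. Fix $k\in\mathbb N$, and assume $|2k^3|\neq 0$. For $f:G\to X$ define $$Df(x,y)=f(kx+y)+f(kx-y)-k[f(x+y)+f(x-y)]-2(k^3-k)f(x)\qquad (x,y\in G).$$ Let $\varphi:G\times G\to[0,\infty)$ be a function such that $$\lim_{n\to\infty}\frac{\varphi(k^nx,k^ny)}{|k|^{3n}}=0\quad\text{for all }x,y\in G,$$ and such that for each $x\in G$ the limit $$\tilde\varphi(x):=\lim_{n\to\infty}\max\Big\{\frac{\varphi(k^jx,0)}{|k|^{3j}}:\ 0\le j<n\Big\}$$ exists. Suppose $f:G\to X$ satisfies $\|Df(x,y)\|\le\varphi(x,y)$ for all $x,y\in G$. Then there exists a cubic mapping $C:G\to X$ (i.e. $DC(x,y)=0$ for all $x,y\in G$) such that $$\|C(x)-f(x)\|\le\frac{1}{|2k^3|}\tilde\varphi(x)\quad\text{for all }x\in G.$$ Moreover, if $$\lim_{i\to\infty}\lim_{n\to\infty}\max\Big\{\frac{\varphi(k^jx,0)}{|k|^{3j}}:\ i\le j<n+i\Big\}=0\quad\text{for all }x\in G,$$ then $C$ is the unique cubic mapping satisfying this inequality.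
   Context: A non-Archimedean field is a field $K$ with a function $|\cdot|:K\to[0,\infty)$ such that $|r|=0$ iff $r=0$, $|rs|=|r||s|$, and $|r+s|\le\max\{|r|,|s|\}$. A non-Archimedean norm on a $K$-vector space $X$ is a function $\|\cdot\|:X\to\mathbb R$ with $\|x\|=0$ iff $x=0$, $\|rx\|=|r|\|x\|$, and $\|x+y\|\le\max\{\|x\|,\|y\|\}$; complete means every Cauchy sequence converges. Integers are regarded as elements of $K$, and $|k|$ denotes the valuation of $k$ in $K$. *)

theory Defs
  imports Complex_Main
begin

definition nonarch_field :: "('k::field \<Rightarrow> real) \<Rightarrow> bool" where
  "nonarch_field av \<longleftrightarrow>
     (\<forall>r. av r \<ge> 0) \<and> (\<forall>r. av r = 0 \<longleftrightarrow> r = 0) \<and>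
     (\<forall>r s. av (r * s) = av r * av s) \<and>
     (\<forall>r s. av (r + s) \<le> max (av r) (av s))"

definition nontrivial_val :: "('k::field \<Rightarrow> real) \<Rightarrow> bool" where
  "nontrivial_val av \<longleftrightarrow> (\<exists>r. av r \<noteq> 0 \<and> av r \<noteq> 1)"

definition nonarch_norm ::
  "('k::field \<Rightarrow> real) \<Rightarrow> ('k \<Rightarrow> 'x::ab_group_add \<Rightarrow> 'x) \<Rightarrow> ('x \<Rightarrow> real) \<Rightarrow> bool" where
  "nonarch_norm av sm nr \<longleftrightarrow>
     (\<forall>x. nr x = 0 \<longleftrightarrow> x = 0) \<and>
     (\<forall>r x. nr (sm r x) = av r * nr x) \<and>
     (\<forall>x y. nr (x + y) \<le> max (nr x) (nr y))"

definition complete_wrt :: "('x::ab_group_add \<Rightarrow> real) \<Rightarrow> bool" where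
  "complete_wrt nr \<longleftrightarrow>
     (\<forall>s :: nat \<Rightarrow> 'x.
        (\<forall>e>0. \<exists>N. \<forall>m\<ge>N. \<forall>n\<ge>N. nr (s m - s n) < e) \<longrightarrow>
        (\<exists>l. (\<lambda>n. nr (s n - l)) \<longlonglongrightarrow> 0))"

primrec gmul :: "nat \<Rightarrow> 'g::ab_group_add \<Rightarrow> 'g" where
  "gmul 0 x = 0"
| "gmul (Suc n) x = x + gmul n x"

definition Dop ::
  "('k::field \<Rightarrow> 'x::ab_group_add \<Rightarrow> 'x) \<Rightarrow> nat \<Rightarrow> ('g::ab_group_add \<Rightarrow> 'x) \<Rightarrow> 'g \<Rightarrow> 'g \<Rightarrow> 'x" where
  "Dop sm k f x y =
     f (gmul k x + y) + f (gmul k x - y)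
     - sm (of_nat k) (f (x + y) + f (x - y))
     - sm (2 * ((of_nat k) ^ 3 - of_nat k)) (f x)"

definition cubic_map ::
  "('k::field \<Rightarrow> 'x::ab_group_add \<Rightarrow> 'x) \<Rightarrow> nat \<Rightarrow> ('g::ab_group_add \<Rightarrow> 'x) \<Rightarrow> bool" where
  "cubic_map sm k C \<longleftrightarrow> (\<forall>x y. Dop sm k C x y = 0)"

end

theory Submission
  imports Defs
begin

lemma gmul_add_left: "gmul (m + n) x = gmul m x + gmul n x"
  by (induction m) (auto simp: add.assoc)
lemma gmul_mult: "gmul (m * n) x = gmul m (gmul n x)"
  by (induction m) (auto simp: gmul_add_left)
lemma gmul_add_right: "gmul n (x + y) = gmul n x + gmul n y"
  by (induction n) (auto simp: algebra_simps)
lemma gmul_zero: "gmul n 0 = 0" by (induction n) auto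
lemma gmul_minus: "gmul n (- x) = - gmul n x" by (induction n) (auto simp: algebra_simps)
lemma gmul_diff: "gmul n (x - y) = gmul n x - gmul n y"
  using gmul_add_right[of n x "-y"] gmul_minus[of n y] by simp
lemma gmul_one: "gmul 1 x = x" by simp

locale NA = vector_space sm
  for sm :: "'k::field \<Rightarrow> 'x::ab_group_add \<Rightarrow> 'x" +
  fixes av :: "'k \<Rightarrow> real" and nr :: "'x \<Rightarrow> real"
  assumes F: "nonarch_field av" and N: "nonarch_norm av sm nr" and Cpl: "complete_wrt nr"
begin

lemma av_nonneg: "av r \<ge> 0" using F by (simp add: nonarch_field_def)
lemma av_zero_iff: "av r = 0 \<longleftrightarrow> r = 0" using F by (simp add: nonarch_field_def)
lemma av_mult: "av (r * s) = av r * av s" using F by (simp add: nonarch_field_def)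
lemma av_one: "av 1 = 1"
  using av_mult[of 1 1] av_zero_iff[of 1] by simp
lemma av_inverse: "av (inverse r) = inverse (av r)"
proof (cases "r = 0")
  case True then show ?thesis using av_zero_iff[of 0] by simp
next
  case False
  then have "av r * av (inverse r) = 1" using av_mult[of r "inverse r"] av_one by simp
  then show ?thesis using inverse_unique by metis
qed
lemma av_power: "av (r ^ n) = av r ^ n"
  by (induction n) (auto simp: av_one av_mult)
lemma av_minus_one: "av (-1) = 1"
proof -
  have "av (-1) * av (-1) = 1" using av_mult[of "-1" "-1"] av_one by simp
  moreover have "av (-1) \<ge> 0" by (rule av_nonneg)
  ultimately show ?thesis by (metis abs_of_nonneg abs_square_eq_1 power2_eq_square)
qed

lemma nr_zero_iff: "nr x = 0 \<longleftrightarrow> x = 0" using N by (simp add: nonarch_norm_def)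
lemma nr_scale: "nr (sm r x) = av r * nr x" using N by (simp add: nonarch_norm_def)
lemma nr_add: "nr (x + y) \<le> max (nr x) (nr y)" using N by (simp add: nonarch_norm_def)
lemma nr_0: "nr 0 = 0" using nr_zero_iff by simp
lemma nr_minus: "nr (- x) = nr x"
proof -
  have "sm (-1) x = - x" by (simp add: scale_minus_left)
  then show ?thesis using nr_scale[of "-1" x] av_minus_one by simp
qed
lemma nr_nonneg: "nr x \<ge> 0"
  using nr_add[of x "-x"] nr_minus[of x] nr_0 by simp
lemma nr_diff: "nr (x - y) \<le> max (nr x) (nr y)"
  using nr_add[of x "-y"] nr_minus[of y] by simp
lemma nr_commute: "nr (x - y) = nr (y - x)"
  using nr_minus[of "x - y"] by simp
lemma nr_tri: "nr (x - z) \<le> max (nr (x - y)) (nr (y - z))"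
  using nr_add[of "x - y" "y - z"] by simp
lemma nr_add_le: "nr (x + y) \<le> nr x + nr y"
  using nr_add[of x y] nr_nonneg[of x] nr_nonneg[of y] by linarith
lemma nr_diff_le: "nr (x - y) \<le> nr x + nr y"
  using nr_diff[of x y] nr_nonneg[of x] nr_nonneg[of y] by linarith

lemma cauchy_steps:
  fixes s :: "nat \<Rightarrow> 'x"
  assumes "\<forall>n. nr (s (Suc n) - s n) \<le> d n" "d \<longlonglongrightarrow> 0"
  shows "\<exists>l. (\<lambda>n. nr (s n - l)) \<longlonglongrightarrow> 0"
proof -
  have "\<forall>e>0. \<exists>N. \<forall>m\<ge>N. \<forall>n\<ge>N. nr (s m - s n) < e"
  proof (intro allI impI)
    fix e :: real assume e: "e > 0"
    from LIMSEQ_D[OF assms(2) e] obtain N where N: "\<forall>n\<ge>N. norm (d n - 0) < e" by blast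
    have A: "nr (s m - s N) < e" if "m \<ge> N" for m
      using that
    proof (induction m rule: dec_induct)
      case base then show ?case using e nr_0 by simp
    next
      case (step m)
      have "nr (s (Suc m) - s N) \<le> max (nr (s (Suc m) - s m)) (nr (s m - s N))" by (rule nr_tri)
      moreover have "nr (s (Suc m) - s m) < e" using assms(1) N step(1)
        by (smt (verit, best) real_norm_def diff_zero)
      ultimately show ?case using step.IH by simp
    qed
    show "\<exists>N. \<forall>m\<ge>N. \<forall>n\<ge>N. nr (s m - s n) < e"
    proof (rule exI[of _ N], intro allI impI)
      fix m n assume "m \<ge> N" "n \<ge> N"
      then have "nr (s m - s N) < e" "nr (s N - s n) < e" using A[of m] A[of n] nr_commute[of "s N" "s n"] by auto
      then show "nr (s m - s n) < e" using nr_tri[of "s m" "s n" "s N"] by simp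
    qed
  qed
  with Cpl show ?thesis unfolding complete_wrt_def by blast
qed

lemma lim_bound:
  assumes "(\<lambda>n. nr (s n - l)) \<longlonglongrightarrow> 0" "\<forall>n. nr (s n - a) \<le> B"
  shows "nr (l - a) \<le> B"
proof -
  have "(\<lambda>n. nr (s n - l) + B) \<longlonglongrightarrow> 0 + B" by (intro tendsto_add assms(1) tendsto_const)
  moreover have "nr (l - a) \<le> nr (s n - l) + B" for n
  proof -
    have "nr (l - a) \<le> max (nr (l - s n)) (nr (s n - a))" by (rule nr_tri)
    moreover have "nr (s n - a) \<le> B" using assms(2) by blast
    ultimately show ?thesis using nr_commute[of l "s n"] nr_nonneg[of "s n - l"] nr_nonneg[of "s n - a"] by (smt (verit))
  qed
  ultimately show ?thesis using LIMSEQ_le_const by fastforce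
qed

lemma zero_bound:
  assumes "\<forall>n. nr a \<le> b n" "b \<longlonglongrightarrow> 0"
  shows "a = 0"
proof -
  have "nr a \<le> 0" using LIMSEQ_le_const[OF assms(2)] assms(1) by blast
  then show ?thesis using nr_nonneg[of a] nr_zero_iff by (simp add: order_antisym)
qed

lemma two_scale: "sm 2 x = x + x"
  by (metis one_add_one scale_left_distrib scale_one)

lemma Dop_y0: "Dop sm k F z 0 = sm 2 (F (gmul k z)) - sm (2 * of_nat k ^ 3) (F z)"
proof -
  have "sm (of_nat k) (F z + F z) = sm (2 * of_nat k) (F z)"
    by (simp add: two_scale[symmetric] mult.commute)
  moreover have "sm (2 * (of_nat k ^ 3 - of_nat k)) (F z) = sm (2 * of_nat k ^ 3) (F z) - sm (2 * of_nat k) (F z)"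
    by (simp add: right_diff_distrib scale_left_diff_distrib)
  ultimately show ?thesis unfolding Dop_def by (simp add: two_scale)
qed

lemma Dop_diff: "Dop sm k F x y - Dop sm k G x y = Dop sm k (\<lambda>z. F z - G z) x y"
  unfolding Dop_def by (simp add: scale_right_diff_distrib scale_right_distrib algebra_simps)

lemma Dop_scale_gmul:
  "Dop sm k (\<lambda>z. sm c (F (gmul m z))) x y = sm c (Dop sm k F (gmul m x) (gmul m y))"
proof -
  have e1: "gmul m (gmul k x + y) = gmul k (gmul m x) + gmul m y"
    by (simp add: gmul_add_right gmul_mult[symmetric] mult.commute)
  have e2: "gmul m (gmul k x - y) = gmul k (gmul m x) - gmul m y"
    by (simp add: gmul_diff gmul_mult[symmetric] mult.commute)
  show ?thesis unfolding Dop_def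
    by (simp add: gmul_add_right gmul_diff gmul_mult[symmetric] scale_right_diff_distrib scale_right_distrib mult.commute)
qed

lemma nr_Dop_le: "nr (Dop sm k F x y) \<le> nr (F (gmul k x + y)) + nr (F (gmul k x - y))
   + av (of_nat k) * (nr (F (x + y)) + nr (F (x - y))) + av (2 * ((of_nat k) ^ 3 - of_nat k)) * nr (F x)"
proof -
  have "nr (Dop sm k F x y) \<le> nr (F (gmul k x + y) + F (gmul k x - y) - sm (of_nat k) (F (x + y) + F (x - y)))
     + nr (sm (2 * ((of_nat k) ^ 3 - of_nat k)) (F x))"
    unfolding Dop_def by (rule nr_diff_le)
  moreover have "nr (F (gmul k x + y) + F (gmul k x - y) - sm (of_nat k) (F (x + y) + F (x - y)))
     \<le> nr (F (gmul k x + y) + F (gmul k x - y)) + nr (sm (of_nat k) (F (x + y) + F (x - y)))"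
    by (rule nr_diff_le)
  moreover have "nr (F (gmul k x + y) + F (gmul k x - y)) \<le> nr (F (gmul k x + y)) + nr (F (gmul k x - y))"
    by (rule nr_add_le)
  moreover have "nr (sm (of_nat k) (F (x + y) + F (x - y))) \<le> av (of_nat k) * (nr (F (x + y)) + nr (F (x - y)))"
    unfolding nr_scale by (intro mult_left_mono nr_add_le av_nonneg)
  ultimately show ?thesis unfolding nr_scale by linarith
qed

context
  fixes k :: nat and \<phi> :: "'g::ab_group_add \<Rightarrow> 'g \<Rightarrow> real" and f :: "'g \<Rightarrow> 'x"
  assumes A0: "av (2 * (of_nat k) ^ 3) \<noteq> 0"
    and phinn: "\<forall>x y. \<phi> x y \<ge> 0"
    and phlim: "\<forall>x y. (\<lambda>n. \<phi> (gmul (k ^ n) x) (gmul (k ^ n) y) / av (of_nat k) ^ (3 * n)) \<longlonglongrightarrow> 0"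
    and conv: "\<forall>x. convergent (\<lambda>n. Max ((\<lambda>j. \<phi> (gmul (k ^ j) x) 0 / av (of_nat k) ^ (3 * j)) ` {..<n}))"
    and Dfb: "\<forall>x y. nr (Dop sm k f x y) \<le> \<phi> x y"
begin

lemma q_ne: "(of_nat k :: 'k) \<noteq> 0" and two_ne: "(2::'k) \<noteq> 0"
  using A0 av_zero_iff by auto

lemma avq_pos: "av (of_nat k) > 0"
  using q_ne av_zero_iff av_nonneg by (metis less_eq_real_def)

lemma AA_pos: "av (2 * (of_nat k) ^ 3) > 0"
  using A0 av_nonneg by (metis less_eq_real_def)

definition gg :: "'g \<Rightarrow> nat \<Rightarrow> real" where
  "gg x j = \<phi> (gmul (k ^ j) x) 0 / av (of_nat k) ^ (3 * j)"

definition ss :: "nat \<Rightarrow> 'g \<Rightarrow> 'x" where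
  "ss n x = sm (inverse (of_nat k ^ (3 * n))) (f (gmul (k ^ n) x))"

lemma gg_nonneg: "gg x j \<ge> 0"
  unfolding gg_def using phinn avq_pos by simp

lemma ss_step: "nr (ss (Suc n) x - ss n x) \<le> gg x n / av (2 * (of_nat k) ^ 3)"
proof -
  define y where "y = gmul (k ^ n) x"
  define q :: 'k where "q = of_nat k"
  have qn: "q \<noteq> 0" using q_ne q_def by simp
  have gy: "gmul (k ^ Suc n) x = gmul k y" unfolding y_def by (simp add: gmul_mult)
  define c where "c = inverse (2 * q ^ 3 * q ^ (3 * n))"
  have c1: "c * 2 = inverse (q ^ (3 * Suc n))" unfolding c_def using qn two_ne
    by (simp add: field_simps power_add)
  have c2: "c * (2 * q ^ 3) = inverse (q ^ (3 * n))" unfolding c_def using qn two_ne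
    by (simp add: field_simps)
  have "ss (Suc n) x - ss n x = sm c (Dop sm k f y 0)"
    unfolding Dop_y0 ss_def gy y_def[symmetric] q_def[symmetric]
    by (simp add: scale_right_diff_distrib c1 c2)
  then have "nr (ss (Suc n) x - ss n x) = av c * nr (Dop sm k f y 0)" by (simp add: nr_scale)
  also have "\<dots> \<le> av c * \<phi> y 0" using Dfb av_nonneg by (simp add: mult_left_mono)
  also have "av c = inverse (av (2 * q ^ 3 * q ^ (3 * n)))"
    unfolding c_def by (rule av_inverse)
  also have "\<dots> = inverse (av (2 * q ^ 3) * av q ^ (3 * n))"
    by (simp only: av_mult av_power)
  finally show ?thesis unfolding gg_def y_def q_def by (simp add: field_simps)
qed

lemma gg_lim: "(\<lambda>n. gg x n) \<longlonglongrightarrow> 0"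
  using phlim[rule_format, of x 0] by (simp add: gmul_zero gg_def)

lemma ss_conv: "\<exists>l. (\<lambda>n. nr (ss n x - l)) \<longlonglongrightarrow> 0"
proof (rule cauchy_steps)
  show "\<forall>n. nr (ss (Suc n) x - ss n x) \<le> gg x n / av (2 * (of_nat k) ^ 3)" using ss_step by blast
  show "(\<lambda>n. gg x n / av (2 * (of_nat k) ^ 3)) \<longlonglongrightarrow> 0"
    using tendsto_divide[OF gg_lim[of x] tendsto_const, of "av (2 * (of_nat k) ^ 3)"] A0 by simp
qed

definition CC :: "'g \<Rightarrow> 'x" where
  "CC x = (SOME l. (\<lambda>n. nr (ss n x - l)) \<longlonglongrightarrow> 0)"

lemma CC_lim: "(\<lambda>n. nr (ss n x - CC x)) \<longlonglongrightarrow> 0"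
  unfolding CC_def using ss_conv[of x] by (rule someI_ex)

lemma ss_bound: "nr (ss n x - f x) \<le> Max (insert 0 (gg x ` {..<n})) / av (2 * (of_nat k) ^ 3)"
proof (induction n)
  case 0
  then show ?case by (simp add: ss_def nr_0)
next
  case (Suc n)
  have "nr (ss (Suc n) x - f x) \<le> max (nr (ss (Suc n) x - ss n x)) (nr (ss n x - f x))" by (rule nr_tri)
  also have "\<dots> \<le> max (gg x n / av (2 * (of_nat k) ^ 3)) (Max (insert 0 (gg x ` {..<n})) / av (2 * (of_nat k) ^ 3))"
    using ss_step Suc.IH by (meson max.mono)
  also have "\<dots> = max (gg x n) (Max (insert 0 (gg x ` {..<n}))) / av (2 * (of_nat k) ^ 3)"
    using AA_pos by (simp add: max_divide_distrib_right)
  also have "max (gg x n) (Max (insert 0 (gg x ` {..<n}))) = Max (insert 0 (gg x ` {..<Suc n}))"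
  proof (cases "n = 0")
    case True then show ?thesis using gg_nonneg[of x 0] by (simp add: lessThan_Suc)
  next
    case False
    then have "gg x ` {..<n} \<noteq> {}" by auto
    then show ?thesis by (simp add: lessThan_Suc max.assoc max.left_commute)
  qed
  finally show ?case .
qed

definition LL :: "'g \<Rightarrow> real" where
  "LL x = lim (\<lambda>n. Max ((\<lambda>j. \<phi> (gmul (k ^ j) x) 0 / av (of_nat k) ^ (3 * j)) ` {..<n}))"

lemma LL_alt: "LL x = lim (\<lambda>n. Max (gg x ` {..<n}))"
  unfolding LL_def gg_def by simp

lemma LL_lim: "(\<lambda>n. Max (gg x ` {..<n})) \<longlonglongrightarrow> LL x"
  using conv unfolding LL_alt gg_def convergent_LIMSEQ_iff by simp

lemma Max_le_LL: "Max (insert 0 (gg x ` {..<n})) \<le> LL x"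
proof (rule LIMSEQ_le_const[OF LL_lim], rule exI[of _ "Suc n"], intro allI impI)
  fix m assume m: "m \<ge> Suc n"
  show "Max (insert 0 (gg x ` {..<n})) \<le> Max (gg x ` {..<m})"
  proof (subst Max_le_iff, simp, simp, intro ballI)
    fix t assume "t \<in> insert 0 (gg x ` {..<n})"
    then consider "t = 0" | j where "j < n" "t = gg x j" by auto
    then show "t \<le> Max (gg x ` {..<m})"
    proof cases
      case 1
      have "gg x 0 \<le> Max (gg x ` {..<m})" using m by (intro Max_ge) auto
      then show ?thesis using 1 gg_nonneg[of x 0] by simp
    next
      case 2
      then show ?thesis using m by (intro Max_ge) auto
    qed
  qed
qed

lemma CC_bound: "nr (CC x - f x) \<le> (1 / av (2 * (of_nat k) ^ 3)) * LL x"
proof -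
  have "nr (CC x - f x) \<le> LL x / av (2 * (of_nat k) ^ 3)"
  proof (rule lim_bound[OF CC_lim], rule allI)
    fix n show "nr (ss n x - f x) \<le> LL x / av (2 * (of_nat k) ^ 3)"
      using ss_bound[of n x] Max_le_LL[of x n] AA_pos by (smt (verit) divide_right_mono)
  qed
  then show ?thesis by simp
qed

lemma ss_eq: "ss n = (\<lambda>z. sm (inverse (of_nat k ^ (3 * n))) (f (gmul (k ^ n) z)))"
  by (rule ext) (simp add: ss_def)

lemma CC_cubic: "Dop sm k CC x y = 0"
proof -
  define e where "e u n = nr (ss n u - CC u)" for u n
  define b where "b n = e (gmul k x + y) n + e (gmul k x - y) n + av (of_nat k) * (e (x + y) n + e (x - y) n)
     + av (2 * ((of_nat k) ^ 3 - of_nat k)) * e x n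
     + \<phi> (gmul (k ^ n) x) (gmul (k ^ n) y) / av (of_nat k) ^ (3 * n)" for n
  show ?thesis
  proof (rule zero_bound)
    show "\<forall>n. nr (Dop sm k CC x y) \<le> b n"
    proof
      fix n
      have "Dop sm k CC x y = Dop sm k (\<lambda>z. CC z - ss n z) x y + Dop sm k (ss n) x y"
        using Dop_diff[where k=k and F=CC and G="ss n" and x=x and y=y] by (simp add: algebra_simps)
      then have "nr (Dop sm k CC x y) \<le> nr (Dop sm k (\<lambda>z. CC z - ss n z) x y) + nr (Dop sm k (ss n) x y)"
        using nr_add_le by metis
      moreover have "nr (Dop sm k (\<lambda>z. CC z - ss n z) x y) \<le> e (gmul k x + y) n + e (gmul k x - y) n + av (of_nat k) * (e (x + y) n + e (x - y) n)
     + av (2 * ((of_nat k) ^ 3 - of_nat k)) * e x n"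
        using nr_Dop_le[of k "\<lambda>z. CC z - ss n z" x y] unfolding e_def by (simp add: nr_commute)
      moreover have "nr (Dop sm k (ss n) x y) \<le> \<phi> (gmul (k ^ n) x) (gmul (k ^ n) y) / av (of_nat k) ^ (3 * n)"
      proof -
        have "nr (Dop sm k (ss n) x y) = av (inverse (of_nat k ^ (3 * n))) * nr (Dop sm k f (gmul (k ^ n) x) (gmul (k ^ n) y))"
          unfolding ss_eq Dop_scale_gmul nr_scale ..
        also have "\<dots> \<le> av (inverse (of_nat k ^ (3 * n))) * \<phi> (gmul (k ^ n) x) (gmul (k ^ n) y)"
          using Dfb av_nonneg by (simp add: mult_left_mono)
        finally show ?thesis by (simp add: av_inverse av_power divide_inverse mult.commute)
      qed
      ultimately show "nr (Dop sm k CC x y) \<le> b n" unfolding b_def by linarith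
    qed
    have el: "(\<lambda>n. e u n) \<longlonglongrightarrow> 0" for u unfolding e_def by (rule CC_lim)
    have "b \<longlonglongrightarrow> 0 + 0 + av (of_nat k) * (0 + 0) + av (2 * ((of_nat k) ^ 3 - of_nat k)) * 0 + 0"
      unfolding b_def by (intro tendsto_intros el phlim[rule_format])
    then show "b \<longlonglongrightarrow> 0" by simp
  qed
qed

lemma cubic_k: "cubic_map sm k C' \<Longrightarrow> C' (gmul k z) = sm (of_nat k ^ 3) (C' z)"
proof -
  assume "cubic_map sm k C'"
  then have "Dop sm k C' z 0 = 0" by (simp add: cubic_map_def)
  then have "sm 2 (C' (gmul k z)) = sm 2 (sm (of_nat k ^ 3) (C' z))" by (simp add: Dop_y0)
  then show ?thesis by (metis scale_cancel_left two_ne)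
qed

lemma cubic_kn: "cubic_map sm k C' \<Longrightarrow> C' (gmul (k ^ i) z) = sm (of_nat k ^ (3 * i)) (C' z)"
proof (induction i)
  case 0 then show ?case by simp
next
  case (Suc i)
  have "C' (gmul (k ^ Suc i) z) = sm (of_nat k ^ 3) (C' (gmul (k ^ i) z))"
    using cubic_k[OF Suc.prems] by (simp add: gmul_mult)
  also have "\<dots> = sm (of_nat k ^ 3 * of_nat k ^ (3 * i)) (C' z)" using Suc.IH Suc.prems by simp
  also have "(of_nat k :: 'k) ^ 3 * of_nat k ^ (3 * i) = of_nat k ^ (3 * Suc i)"
    by (simp add: power_add[symmetric])
  finally show ?case .
qed

lemma gg_eta: "gg x = (\<lambda>j. \<phi> (gmul (k ^ j) x) 0 / av (of_nat k) ^ (3 * j))"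
  by (rule ext) (simp add: gg_def)

lemma LL_shift: "LL (gmul (k ^ i) x) / av (of_nat k) ^ (3 * i) = lim (\<lambda>n. Max (gg x ` {i..<n + i}))"
proof -
  define c where "c = av (of_nat k) ^ (3 * i)"
  have cpos: "c > 0" unfolding c_def using avq_pos by simp
  have gs: "gg (gmul (k ^ i) x) j / c = gg x (j + i)" for j
  proof -
    have "gmul (k ^ j) (gmul (k ^ i) x) = gmul (k ^ (j + i)) x" by (simp add: gmul_mult[symmetric] power_add)
    moreover have "av (of_nat k) ^ (3 * (j + i)) = av (of_nat k) ^ (3 * j) * c"
      unfolding c_def by (simp add: power_add distrib_left)
    ultimately show ?thesis unfolding gg_def by simp
  qed
  have seteq: "(\<lambda>j. gg x (j + i)) ` {..<m} = gg x ` {i..<m + i}" for m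
  proof -
    have "(\<lambda>j. j + i) ` {0..<m} = {0 + i..<m + i}" by (rule image_add_atLeastLessThan')
    then have "gg x ` {i..<m + i} = gg x ` ((\<lambda>j. j + i) ` {..<m})" by (simp add: atLeast0LessThan)
    then show ?thesis by (simp add: image_image)
  qed
  have mono: "mono (\<lambda>t::real. t / c)" using cpos by (simp add: mono_def divide_right_mono)
  have eq: "Max (gg (gmul (k ^ i) x) ` {..<Suc n}) / c = Max (gg x ` {i..<Suc n + i})" for n
  proof -
    have "Max (gg (gmul (k ^ i) x) ` {..<Suc n}) / c = Max ((\<lambda>t. t / c) ` (gg (gmul (k ^ i) x) ` {..<Suc n}))"
      by (rule mono_Max_commute[OF mono]) auto
    also have "\<dots> = Max ((\<lambda>j. gg x (j + i)) ` {..<Suc n})" by (simp add: image_image gs)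
    finally show ?thesis by (simp add: seteq)
  qed
  have "(\<lambda>n. Max (gg (gmul (k ^ i) x) ` {..<n}) / c) \<longlonglongrightarrow> LL (gmul (k ^ i) x) / c"
    by (intro tendsto_divide LL_lim tendsto_const) (use cpos in simp)
  then have "(\<lambda>n. Max (gg (gmul (k ^ i) x) ` {..<Suc n}) / c) \<longlonglongrightarrow> LL (gmul (k ^ i) x) / c"
    by (rule LIMSEQ_Suc)
  then have "(\<lambda>n. Max (gg x ` {i..<Suc n + i})) \<longlonglongrightarrow> LL (gmul (k ^ i) x) / c"
    by (simp only: eq)
  then have "(\<lambda>n. Max (gg x ` {i..<n + i})) \<longlonglongrightarrow> LL (gmul (k ^ i) x) / c"
    by (rule LIMSEQ_imp_Suc)
  then show ?thesis unfolding c_def by (rule limI[symmetric])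
qed

lemma uniq:
  assumes hyp: "\<forall>x. (\<lambda>i. lim (\<lambda>n. Max ((\<lambda>j. \<phi> (gmul (k ^ j) x) 0 / av (of_nat k) ^ (3 * j)) ` {i..<n + i}))) \<longlonglongrightarrow> 0"
    and C1: "cubic_map sm k C1" "\<forall>x. nr (C1 x - f x) \<le> (1 / av (2 * (of_nat k) ^ 3)) * LL x"
    and C2: "cubic_map sm k C2" "\<forall>x. nr (C2 x - f x) \<le> (1 / av (2 * (of_nat k) ^ 3)) * LL x"
  shows "C1 = C2"
proof (rule ext)
  fix x
  define b where "b i = (1 / av (2 * (of_nat k) ^ 3)) * lim (\<lambda>n. Max (gg x ` {i..<n + i}))" for i
  have "C1 x - C2 x = 0"
  proof (rule zero_bound)
    show "\<forall>i. nr (C1 x - C2 x) \<le> b i"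
    proof
      fix i
      define z where "z = gmul (k ^ i) x"
      have "C1 z - C2 z = sm (of_nat k ^ (3 * i)) (C1 x - C2 x)"
        unfolding z_def cubic_kn[OF C1(1)] cubic_kn[OF C2(1)] by (simp add: scale_right_diff_distrib)
      then have "C1 x - C2 x = sm (inverse (of_nat k ^ (3 * i))) (C1 z - C2 z)"
        using q_ne by simp
      then have "nr (C1 x - C2 x) = inverse (av (of_nat k) ^ (3 * i)) * nr (C1 z - C2 z)"
        by (simp add: nr_scale av_inverse av_power)
      also have "nr (C1 z - C2 z) \<le> (1 / av (2 * (of_nat k) ^ 3)) * LL z"
        using nr_tri[of "C1 z" "C2 z" "f z"] C1(2)[rule_format, of z] C2(2)[rule_format, of z] nr_commute[of "f z" "C2 z"] by (smt (verit))
      then have "inverse (av (of_nat k) ^ (3 * i)) * nr (C1 z - C2 z) \<le> inverse (av (of_nat k) ^ (3 * i)) * ((1 / av (2 * (of_nat k) ^ 3)) * LL z)"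
        by (rule mult_left_mono) (use avq_pos in simp)
      also have "\<dots> = (1 / av (2 * (of_nat k) ^ 3)) * (LL z / av (of_nat k) ^ (3 * i))"
        by (simp add: field_simps)
      also have "\<dots> = b i" unfolding b_def z_def LL_shift ..
      finally show "nr (C1 x - C2 x) \<le> b i" .
    qed
    have "(\<lambda>i. lim (\<lambda>n. Max (gg x ` {i..<n + i}))) \<longlonglongrightarrow> 0" using hyp unfolding gg_eta by blast
    then have "b \<longlonglongrightarrow> (1 / av (2 * (of_nat k) ^ 3)) * 0" unfolding b_def by (intro tendsto_mult tendsto_const)
    then show "b \<longlonglongrightarrow> 0" by simp
  qed
  then show "C1 x = C2 x" by simp
qed

lemma final:
  "(\<exists>C. cubic_map sm k C \<and>
            (\<forall>x. nr (C x - f x) \<le> (1 / av (2 * (of_nat k) ^ 3)) *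
               lim (\<lambda>n. Max ((\<lambda>j. \<phi> (gmul (k ^ j) x) 0 / av (of_nat k) ^ (3 * j)) ` {..<n}))))
       \<and> ((\<forall>x. (\<lambda>i. lim (\<lambda>n. Max ((\<lambda>j. \<phi> (gmul (k ^ j) x) 0 / av (of_nat k) ^ (3 * j)) ` {i..<n + i})))
                 \<longlonglongrightarrow> 0)
          \<longrightarrow> (\<exists>!C. cubic_map sm k C \<and>
            (\<forall>x. nr (C x - f x) \<le> (1 / av (2 * (of_nat k) ^ 3)) *
               lim (\<lambda>n. Max ((\<lambda>j. \<phi> (gmul (k ^ j) x) 0 / av (of_nat k) ^ (3 * j)) ` {..<n})))))"
proof -
  have ex: "cubic_map sm k CC \<and> (\<forall>x. nr (CC x - f x) \<le> (1 / av (2 * (of_nat k) ^ 3)) * LL x)"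
    using CC_cubic CC_bound by (simp add: cubic_map_def)
  show ?thesis
    unfolding LL_def[symmetric]
    using ex uniq by blast
qed

end

end

theorem theorem2p1:
  fixes av :: "'k::field \<Rightarrow> real"
    and sm :: "'k \<Rightarrow> 'x::ab_group_add \<Rightarrow> 'x"
    and nr :: "'x \<Rightarrow> real"
    and k :: nat
    and \<phi> :: "'g::ab_group_add \<Rightarrow> 'g \<Rightarrow> real"
    and f :: "'g \<Rightarrow> 'x"
  assumes "nonarch_field av" and "nontrivial_val av"
    and "vector_space sm"
    and "nonarch_norm av sm nr" and "complete_wrt nr"
    and "av (2 * (of_nat k) ^ 3) \<noteq> 0"
    and "\<forall>x y. \<phi> x y \<ge> 0"
    and "\<forall>x y. (\<lambda>n. \<phi> (gmul (k ^ n) x) (gmul (k ^ n) y) / av (of_nat k) ^ (3 * n))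
                 \<longlonglongrightarrow> 0"
    and "\<forall>x. convergent (\<lambda>n. Max ((\<lambda>j. \<phi> (gmul (k ^ j) x) 0 / av (of_nat k) ^ (3 * j)) ` {..<n}))"
    and "\<forall>x y. nr (Dop sm k f x y) \<le> \<phi> x y"
  shows "(\<exists>C. cubic_map sm k C \<and>
            (\<forall>x. nr (C x - f x) \<le> (1 / av (2 * (of_nat k) ^ 3)) *
               lim (\<lambda>n. Max ((\<lambda>j. \<phi> (gmul (k ^ j) x) 0 / av (of_nat k) ^ (3 * j)) ` {..<n}))))
       \<and> ((\<forall>x. (\<lambda>i. lim (\<lambda>n. Max ((\<lambda>j. \<phi> (gmul (k ^ j) x) 0 / av (of_nat k) ^ (3 * j)) ` {i..<n + i})))
                 \<longlonglongrightarrow> 0)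
          \<longrightarrow> (\<exists>!C. cubic_map sm k C \<and>
            (\<forall>x. nr (C x - f x) \<le> (1 / av (2 * (of_nat k) ^ 3)) *
               lim (\<lambda>n. Max ((\<lambda>j. \<phi> (gmul (k ^ j) x) 0 / av (of_nat k) ^ (3 * j)) ` {..<n})))))"
proof -
  interpret NA sm av nr
    using assms(3,1,4,5) by (simp add: NA_def NA_axioms_def)
  show ?thesis by (rule final[OF assms(6-10)])
qed

end
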